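(* Let $T$ be a bounded linear operator on a complex Banach space $X$ with spectrum $\sigma(T)=\{1\}$. Then $\mathcal{E}(T)\cap\mathcal{E}(T^{-1})=\{0\}$.
   Context: For a bounded linear operator $S$ on $X$, $\mathcal{E}(S)=\{x\in X:S^nx\to0\text{ as }n\to\infty\}$. (Here $T$ is invertible since $0\notin\sigma(T)$.) *)

theory Defs
  imports "HOL-Analysis.Analysis"
begin

text \<open>Complex vector spaces: a real vector space with a compatible complex scalar
  multiplication (the library only provides real normed spaces).\<close>

class complex_vector = real_vector +
  fixes scaleC :: "complex \<Rightarrow> 'a \<Rightarrow> 'a" (infixr \<open>*\<^sub>C\<close> 75)
  assumes scaleC_add_right: "a *\<^sub>C (x + y) = a *\<^sub>C x + a *\<^sub>C y"
    and scaleC_add_left: "(a + b) *\<^sub>C x = a *\<^sub>C x + b *\<^sub>C x"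
    and scaleC_scaleC: "a *\<^sub>C (b *\<^sub>C x) = (a * b) *\<^sub>C x"
    and scaleC_one: "1 *\<^sub>C x = x"
    and scaleR_scaleC: "scaleR r x = (complex_of_real r) *\<^sub>C x"

class complex_normed_vector = complex_vector + real_normed_vector +
  assumes norm_scaleC: "norm (a *\<^sub>C x) = cmod a * norm x"

definition bounded_clinear :: "('a::complex_normed_vector \<Rightarrow> 'b::complex_normed_vector) \<Rightarrow> bool" where
  "bounded_clinear T \<longleftrightarrow> bounded_linear T \<and> (\<forall>c x. T (c *\<^sub>C x) = c *\<^sub>C T x)"

definition op_invertible :: "('a::complex_normed_vector \<Rightarrow> 'a) \<Rightarrow> bool" where
  "op_invertible T \<longleftrightarrow> (\<exists>S. bounded_clinear S \<and> S \<circ> T = id \<and> T \<circ> S = id)"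

definition spectrum :: "('a::complex_normed_vector \<Rightarrow> 'a) \<Rightarrow> complex set" where
  "spectrum T = {z. \<not> op_invertible (\<lambda>x. T x - z *\<^sub>C x)}"

text \<open>E(S) = {x. S^n x \<rightarrow> 0}.\<close>
definition decay_set :: "('a::real_normed_vector \<Rightarrow> 'a) \<Rightarrow> 'a set" where
  "decay_set S = {x. (\<lambda>n. (S ^^ n) x) \<longlonglongrightarrow> 0}"

end

theory Submission
  imports Defs "HOL-Complex_Analysis.Complex_Analysis"
begin


definition hbG :: "'a::real_normed_vector \<Rightarrow> ('a \<times> real) set \<Rightarrow> bool" where
"hbG x G \<longleftrightarrow> (x, norm x) \<in> G \<and> (\<forall>u r s. (u,r)\<in>G \<longrightarrow> (u,s)\<in>G \<longrightarrow> r = s)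
   \<and> (\<forall>u r v s. (u,r)\<in>G \<longrightarrow> (v,s)\<in>G \<longrightarrow> (u+v, r+s)\<in>G)
   \<and> (\<forall>u r c. (u,r)\<in>G \<longrightarrow> (c *\<^sub>R u, c*r)\<in>G) \<and> (\<forall>u r. (u,r)\<in>G \<longrightarrow> r \<le> norm u)"

lemma hb_base:
  fixes x :: "'a::real_normed_vector"
  assumes "x \<noteq> 0"
  shows "hbG x {(t *\<^sub>R x, t * norm x) | t. True}"
proof -
  have "r = s" if "t *\<^sub>R x = t' *\<^sub>R x" "r = t * norm x" "s = t' * norm x" for t t' r s
    using that assms by (metis scaleR_cancel_right)
  moreover have "t * norm x \<le> norm (t *\<^sub>R x)" for t
    by (metis abs_ge_self mult_right_mono norm_ge_zero norm_scaleR)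
  ultimately show ?thesis unfolding hbG_def
    apply (intro conjI)
        apply (rule CollectI, rule exI[of _ 1], simp)
       apply blast
      apply (clarsimp, metis scaleR_add_left distrib_right)
     apply (clarsimp, metis scaleR_scaleR mult.assoc)
    apply (clarsimp simp del: norm_scaleR)
    done
qed

lemma hb_chain:
  fixes x :: "'a::real_normed_vector"
  assumes "C \<in> chains {G. hbG x G}" "C \<noteq> {}"
  shows "hbG x (\<Union>C)"
proof -
  have ch: "\<And>A B. A \<in> C \<Longrightarrow> B \<in> C \<Longrightarrow> A \<subseteq> B \<or> B \<subseteq> A" and sub: "\<And>A. A \<in> C \<Longrightarrow> hbG x A"
    using assms unfolding chains_def chain_subset_def by auto
  have two: "\<exists>G\<in>C. a \<in> G \<and> b \<in> G" if "a \<in> \<Union>C" "b \<in> \<Union>C" for a b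
    using that ch by blast
  show ?thesis unfolding hbG_def
  proof (intro conjI allI impI)
    show "(x, norm x) \<in> \<Union> C" using assms(2) sub unfolding hbG_def by blast
  next
    fix u r s assume "(u, r) \<in> \<Union> C" "(u, s) \<in> \<Union> C"
    then obtain G where "G \<in> C" "(u,r) \<in> G" "(u,s)\<in>G" using two by blast
    then show "r = s" using sub unfolding hbG_def by blast
  next
    fix u r v s assume "(u, r) \<in> \<Union> C" "(v, s) \<in> \<Union> C"
    then obtain G where "G \<in> C" "(u,r) \<in> G" "(v,s)\<in>G" using two by blast
    then show "(u+v, r+s) \<in> \<Union> C" using sub unfolding hbG_def by blast
  next
    fix u r c assume "(u, r) \<in> \<Union> C"
    then obtain G where "G \<in> C" "(u,r) \<in> G" by blast
    then show "(c *\<^sub>R u, c*r) \<in> \<Union> C" using sub unfolding hbG_def by blast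
  next
    fix u r assume "(u, r) \<in> \<Union> C"
    then obtain G where "G \<in> C" "(u,r) \<in> G" by blast
    then show "r \<le> norm u" using sub unfolding hbG_def by blast
  qed
qed

lemma hb_extend:
  fixes x :: "'a::real_normed_vector"
  assumes G: "hbG x G" and y: "y \<notin> fst ` G"
  shows "\<exists>G'. hbG x G' \<and> G \<subseteq> G' \<and> G \<noteq> G'"
proof -
  have hfun: "\<And>u r s. (u,r)\<in>G \<Longrightarrow> (u,s)\<in>G \<Longrightarrow> r = s"
   and add: "\<And>u r v s. (u,r)\<in>G \<Longrightarrow> (v,s)\<in>G \<Longrightarrow> (u+v, r+s)\<in>G"
   and scl: "\<And>u r c. (u,r)\<in>G \<Longrightarrow> (c *\<^sub>R u, c*r)\<in>G"
   and dom: "\<And>u r. (u,r)\<in>G \<Longrightarrow> r \<le> norm u"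
   and xin: "(x, norm x) \<in> G"
    using G unfolding hbG_def by blast+
  have zero: "(0,0) \<in> G" using scl[OF xin, of 0] by simp
  define L where "L = (\<lambda>(v,s). s - norm (v - y)) ` G"
  define c where "c = Sup L"
  have key: "s - norm (v - y) \<le> norm (v' + y) - s'" if "(v,s)\<in>G" "(v',s')\<in>G" for v s v' s'
  proof -
    have "s + s' \<le> norm (v + v')" using dom[OF add[OF that]] .
    also have "\<dots> = norm ((v - y) + (v' + y))" by (simp add: algebra_simps)
    also have "\<dots> \<le> norm (v - y) + norm (v' + y)" by (rule norm_triangle_ineq)
    finally show ?thesis by simp
  qed
  have Lne: "L \<noteq> {}" using zero unfolding L_def by blast
  have Lbdd: "bdd_above L" unfolding L_def bdd_above_def
    using key[OF _ zero] by fastforce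
  have c_low: "s - norm (v - y) \<le> c" if "(v,s)\<in>G" for v s
    unfolding c_def by (rule cSup_upper[OF _ Lbdd]) (use that L_def in force)
  have c_up: "c \<le> norm (v' + y) - s'" if "(v',s')\<in>G" for v' s'
    unfolding c_def by (rule cSup_least[OF Lne]) (use key that L_def in force)
  define G' where "G' = {(u + t *\<^sub>R y, r + t * c) | u r t. (u,r) \<in> G}"
  have sub: "G \<subseteq> G'" unfolding G'_def by force
  have yin: "(y, c) \<in> G'" unfolding G'_def using zero by force
  have neq: "G \<noteq> G'" using yin y by force
  have hb': "hbG x G'" unfolding hbG_def
  proof (intro conjI allI impI)
    show "(x, norm x) \<in> G'" using sub xin by blast
  next
    fix w r1 r2 assume "(w, r1) \<in> G'" "(w, r2) \<in> G'"
    then obtain u r t u' r' t' where A: "(u,r)\<in>G" "(u',r')\<in>G" "w = u + t *\<^sub>R y" "r1 = r + t * c"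
       "w = u' + t' *\<^sub>R y" "r2 = r' + t' * c" unfolding G'_def by blast
    show "r1 = r2"
    proof (cases "t = t'")
      case True
      then have "u = u'" using A by simp
      then show ?thesis using A hfun True by blast
    next
      case False
      have "(u + (-1) *\<^sub>R u', r + (-1) * r') \<in> G" using add[OF A(1) scl[OF A(2)]] .
      then have "((1/(t' - t)) *\<^sub>R (u - u'), (1/(t'-t)) * (r - r')) \<in> G" using scl[of "u - u'" "r - r'" "1/(t'-t)"] by simp
      moreover have "(1/(t' - t)) *\<^sub>R (u - u') = y"
      proof -
        have "u - u' = (t' - t) *\<^sub>R y" using A by (simp add: algebra_simps)
        then show ?thesis using False by simp
      qed
      ultimately have "y \<in> fst ` G" by force
      then show ?thesis using y by blast
    qed
  next
    fix w1 r1 w2 r2 assume "(w1, r1) \<in> G'" "(w2, r2) \<in> G'"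
    then obtain u r t u' r' t' where A: "(u,r)\<in>G" "(u',r')\<in>G" "w1 = u + t *\<^sub>R y" "r1 = r + t * c"
       "w2 = u' + t' *\<^sub>R y" "r2 = r' + t' * c" unfolding G'_def by blast
    have "(u+u', r+r') \<in> G" using add A by blast
    moreover have "w1 + w2 = (u+u') + (t+t') *\<^sub>R y" "r1 + r2 = (r+r') + (t+t') * c"
      using A by (simp_all add: algebra_simps)
    ultimately show "(w1 + w2, r1 + r2) \<in> G'" unfolding G'_def by blast
  next
    fix w r1 a assume "(w, r1) \<in> G'"
    then obtain u r t where A: "(u,r)\<in>G" "w = u + t *\<^sub>R y" "r1 = r + t * c"
      unfolding G'_def by blast
    have "(a *\<^sub>R u, a * r) \<in> G" using scl A by blast
    moreover have "a *\<^sub>R w = a *\<^sub>R u + (a*t) *\<^sub>R y" "a * r1 = a * r + (a*t) * c"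
      using A by (simp_all add: algebra_simps)
    ultimately show "(a *\<^sub>R w, a * r1) \<in> G'" unfolding G'_def by blast
  next
    fix w r1 assume "(w, r1) \<in> G'"
    then obtain u r t where A: "(u,r)\<in>G" "w = u + t *\<^sub>R y" "r1 = r + t * c"
      unfolding G'_def by blast
    show "r1 \<le> norm w"
    proof (cases "t = 0")
      case True then show ?thesis using A dom by simp
    next
      case False
      define v where "v = (1/t) *\<^sub>R u"
      define s where "s = (1/t) * r"
      have vs: "(v, s) \<in> G" unfolding v_def s_def using scl A by blast
      have u_eq: "u = t *\<^sub>R v" "r = t * s" using False unfolding v_def s_def by simp_all
      show ?thesis
      proof (cases "t > 0")
        case True
        have "s + c \<le> norm (v + y)" using c_up[OF vs] by simp
        then have "t * (s + c) \<le> t * norm (v + y)" using True by (simp add: mult_left_mono)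
        also have "t * norm (v + y) = norm (t *\<^sub>R (v + y))" using True by simp
        finally show ?thesis using A u_eq by (simp add: algebra_simps)
      next
        case False
        then have tn: "t < 0" using \<open>t \<noteq> 0\<close> by simp
        have vs': "(-v, -s) \<in> G" using scl[OF vs, of "-1"] by simp
        have "-s - c \<le> norm (-v - y)" using c_low[OF vs'] by simp
        also have "norm (-v - y) = norm (v + y)" proof -
          have "-v - y = -(v+y)" by simp
          then show ?thesis by (simp only: norm_minus_cancel)
        qed
        finally have "(-t) * (-s - c) \<le> (-t) * norm (v + y)" using tn by (simp add: mult_left_mono)
        also have "(-t) * norm (v + y) = norm (t *\<^sub>R (v + y))" using tn by simp
        finally show ?thesis using A u_eq by (simp add: algebra_simps)
      qed
    qed
  qed
  then show ?thesis using sub neq by blast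
qed

lemma hahn_banach_real:
  fixes x :: "'a::real_normed_vector"
  assumes "x \<noteq> 0"
  shows "\<exists>\<psi>. linear \<psi> \<and> (\<forall>v. \<bar>\<psi> v\<bar> \<le> norm v) \<and> \<psi> x = norm x"
proof -
  define A where "A = {G. hbG x G}"
  have "\<forall>C\<in>chains A. \<exists>U\<in>A. \<forall>X\<in>C. X \<subseteq> U"
  proof
    fix C assume C: "C \<in> chains A"
    show "\<exists>U\<in>A. \<forall>X\<in>C. X \<subseteq> U"
    proof (cases "C = {}")
      case True then show ?thesis using hb_base[OF assms] A_def by blast
    next
      case False then show ?thesis using hb_chain[of C x] C A_def by blast
    qed
  qed
  from Zorn_Lemma2[OF this] obtain M where M: "M \<in> A" and max: "\<And>X. X \<in> A \<Longrightarrow> M \<subseteq> X \<Longrightarrow> X = M"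
    by blast
  have hM: "hbG x M" using M A_def by simp
  have tot: "\<exists>r. (v, r) \<in> M" for v
  proof (rule ccontr)
    assume "\<nexists>r. (v, r) \<in> M"
    then have "v \<notin> fst ` M" by force
    from hb_extend[OF hM this] obtain G' where "hbG x G'" "M \<subseteq> G'" "M \<noteq> G'" by blast
    then show False using max A_def by force
  qed
  have hfun: "\<And>u r s. (u,r)\<in>M \<Longrightarrow> (u,s)\<in>M \<Longrightarrow> r = s"
   and hadd: "\<And>u r v s. (u,r)\<in>M \<Longrightarrow> (v,s)\<in>M \<Longrightarrow> (u+v, r+s)\<in>M"
   and hscl: "\<And>u r c. (u,r)\<in>M \<Longrightarrow> (c *\<^sub>R u, c*r)\<in>M"
   and hdom: "\<And>u r. (u,r)\<in>M \<Longrightarrow> r \<le> norm u"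
   and xin: "(x, norm x) \<in> M"
    using hM unfolding hbG_def by blast+
  define \<psi> where "\<psi> v = (THE r. (v, r) \<in> M)" for v
  have psi: "(v, \<psi> v) \<in> M" for v
    unfolding \<psi>_def using tot[of v] hfun by (metis theI)
  have psi_eq: "(v, r) \<in> M \<Longrightarrow> \<psi> v = r" for v r
    using psi hfun by blast
  have lin: "linear \<psi>"
  proof (rule linearI)
    show "\<psi> (b1 + b2) = \<psi> b1 + \<psi> b2" for b1 b2 using psi_eq[OF hadd[OF psi psi]] .
    show "\<psi> (r *\<^sub>R b) = r *\<^sub>R \<psi> b" for r b using psi_eq[OF hscl[OF psi]] by simp
  qed
  have bd: "\<bar>\<psi> v\<bar> \<le> norm v" for v
  proof -
    have "\<psi> v \<le> norm v" using hdom[OF psi] .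
    moreover have "\<psi> (-v) \<le> norm (-v)" using hdom[OF psi] .
    moreover have "\<psi> (-v) = - \<psi> v" using linear_neg[OF lin] .
    ultimately show ?thesis by simp
  qed
  show ?thesis using lin bd psi_eq[OF xin] by blast
qed


lemma scaleC_zero_left [simp]: "0 *\<^sub>C (x::'a::complex_vector) = 0"
  using scaleR_scaleC[of 0 x] by simp
lemma scaleC_zero_right [simp]: "a *\<^sub>C (0::'a::complex_vector) = 0"
proof -
  have "a *\<^sub>C 0 = a *\<^sub>C (0 + 0)" by simp
  also have "\<dots> = a *\<^sub>C 0 + a *\<^sub>C 0" by (rule scaleC_add_right)
  finally show ?thesis by simp
qed
lemma scaleC_minus_right: "a *\<^sub>C (- (x::'a::complex_vector)) = - (a *\<^sub>C x)"
proof -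
  have "a *\<^sub>C (- x) + a *\<^sub>C x = 0" by (simp flip: scaleC_add_right)
  then show ?thesis by (simp add: eq_neg_iff_add_eq_0)
qed
lemma scaleC_diff_right: "a *\<^sub>C ((x::'a::complex_vector) - y) = a *\<^sub>C x - a *\<^sub>C y"
  by (metis diff_conv_add_uminus scaleC_add_right scaleC_minus_right)
lemma scaleC_minus_left: "(- a) *\<^sub>C (x::'a::complex_vector) = - (a *\<^sub>C x)"
proof -
  have "(- a) *\<^sub>C x + a *\<^sub>C x = 0" by (simp flip: scaleC_add_left)
  then show ?thesis by (simp add: eq_neg_iff_add_eq_0)
qed
lemma scaleC_diff_left: "(a - b) *\<^sub>C (x::'a::complex_vector) = a *\<^sub>C x - b *\<^sub>C x"
  by (metis diff_conv_add_uminus scaleC_add_left scaleC_minus_left)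
lemma scaleC_sum_right: "a *\<^sub>C (\<Sum>i\<in>I. f i) = (\<Sum>i\<in>I. a *\<^sub>C (f i::'a::complex_vector))"
  by (induction I rule: infinite_finite_induct) (simp_all add: scaleC_add_right)
lemma scaleC_of_real: "complex_of_real r *\<^sub>C (x::'a::complex_vector) = r *\<^sub>R x"
  by (simp add: scaleR_scaleC)
lemma scaleC_minus1: "(-1) *\<^sub>C (x::'a::complex_vector) = - x"
  using scaleR_scaleC[of "-1" x] by simp

lemma norm_scaleC' [simp]: "norm (a *\<^sub>C (x::'a::complex_normed_vector)) = cmod a * norm x"
  by (rule norm_scaleC)

lemma hahn_banach_complex:
  fixes x :: "'a::complex_normed_vector"
  assumes "x \<noteq> 0"
  shows "\<exists>\<phi>::'a\<Rightarrow>complex. bounded_linear \<phi> \<and> (\<forall>c v. \<phi> (c *\<^sub>C v) = c * \<phi> v) \<and> \<phi> x \<noteq> 0"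
proof -
  obtain \<psi> :: "'a \<Rightarrow> real" where lin: "linear \<psi>" and bd: "\<And>v. \<bar>\<psi> v\<bar> \<le> norm v" and px: "\<psi> x = norm x"
    using hahn_banach_real[OF assms] by blast
  define \<phi> where "\<phi> v = complex_of_real (\<psi> v) - \<i> * complex_of_real (\<psi> (\<i> *\<^sub>C v))" for v
  have add: "\<psi> (a + b) = \<psi> a + \<psi> b" for a b using lin by (simp add: linear_add)
  have scl: "\<psi> (r *\<^sub>R a) = r * \<psi> a" for r a using lin by (simp add: linear_scale)
  have comm: "\<i> *\<^sub>C (r *\<^sub>R v) = r *\<^sub>R (\<i> *\<^sub>C v)" for r v
    by (simp add: scaleR_scaleC scaleC_scaleC mult.commute)
  have bl: "bounded_linear \<phi>"
  proof (rule bounded_linear_intro[of _ 2])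
    show "\<phi> (a + b) = \<phi> a + \<phi> b" for a b
      unfolding \<phi>_def by (simp add: add scaleC_add_right algebra_simps)
    show "\<phi> (r *\<^sub>R a) = r *\<^sub>R \<phi> a" for r a
      unfolding \<phi>_def by (simp add: comm scl scaleR_conv_of_real algebra_simps)
    show "norm (\<phi> a) \<le> norm a * 2" for a
    proof -
      have "norm (\<phi> a) \<le> norm (complex_of_real (\<psi> a)) + norm (\<i> * complex_of_real (\<psi> (\<i> *\<^sub>C a)))"
        unfolding \<phi>_def by (rule norm_triangle_ineq4)
      also have "\<dots> = \<bar>\<psi> a\<bar> + \<bar>\<psi> (\<i> *\<^sub>C a)\<bar>" by (simp add: norm_mult)
      also have "\<dots> \<le> norm a + norm (\<i> *\<^sub>C a)" using bd by (intro add_mono)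
      also have "norm (\<i> *\<^sub>C a) = norm a" by simp
      finally show ?thesis by simp
    qed
  qed
  have ii: "\<i> *\<^sub>C (\<i> *\<^sub>C v) = - v" for v
    by (simp add: scaleC_scaleC scaleC_minus1)
  have neg: "\<psi> (- v) = - \<psi> v" for v using lin by (simp add: linear_neg)
  have pi: "\<phi> (\<i> *\<^sub>C v) = \<i> * \<phi> v" for v
    unfolding \<phi>_def by (simp add: ii neg algebra_simps)
  have pr: "\<phi> (complex_of_real r *\<^sub>C v) = complex_of_real r * \<phi> v" for r v
    using bl by (simp add: scaleC_of_real linear_scale bounded_linear.linear scaleR_conv_of_real)
  have cl: "\<phi> (c *\<^sub>C v) = c * \<phi> v" for c v
  proof -
    have c: "c = complex_of_real (Re c) + \<i> * complex_of_real (Im c)" by (simp add: complex_eq_iff)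
    have "c *\<^sub>C v = complex_of_real (Re c) *\<^sub>C v + \<i> *\<^sub>C (complex_of_real (Im c) *\<^sub>C v)"
      by (subst c) (simp add: scaleC_add_left scaleC_scaleC)
    then have "\<phi> (c *\<^sub>C v) = complex_of_real (Re c) * \<phi> v + \<i> * (complex_of_real (Im c) * \<phi> v)"
      by (simp add: bounded_linear.linear[OF bl] linear_add pi pr)
    also have "\<dots> = c * \<phi> v" by (subst (3) c) (simp add: algebra_simps)
    finally show ?thesis .
  qed
  have "Re (\<phi> x) = norm x" unfolding \<phi>_def by (simp add: px)
  then have "\<phi> x \<noteq> 0" using assms by auto
  then show ?thesis using bl cl by blast
qed


lemma circle_poly:
  fixes c z :: complex and s :: real
  assumes "s > 0" "cmod (z - c) = s"
  defines "P \<equiv> \<lambda>z. cnj c * (z - c)^2 / of_real s + of_real (cmod c ^ 2 + s^2 - 1) * (z - c) / of_real s + of_real s * c"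
  shows "cmod (P z) = \<bar>cmod z ^ 2 - 1\<bar>"
proof -
  define u where "u = (z - c) / of_real s"
  have zu: "z = c + of_real s * u" using assms(1) unfolding u_def by simp
  have nu: "cmod u = 1" using assms unfolding u_def by (simp add: norm_divide)
  have uu: "u * cnj u = 1" using nu complex_norm_square[of u] by simp
  have cc: "c * cnj c = of_real (cmod c ^ 2)" using complex_norm_square[of c] by simp
  have zz: "z * cnj z = of_real (cmod z ^ 2)" using complex_norm_square[of z] by simp
  have Pz: "P z = cnj c * of_real s * u^2 + of_real (cmod c ^ 2 + s^2 - 1) * u + of_real s * c"
    unfolding P_def using assms(1) by (simp add: zu power2_eq_square field_simps)
  have "z * cnj z = c * cnj c + of_real s * c * cnj u + of_real s * u * cnj c + of_real s ^ 2 * (u * cnj u)"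
    by (simp add: zu algebra_simps power2_eq_square)
  then have "P z = u * (z * cnj z - 1)"
    unfolding Pz by (simp add: cc uu algebra_simps power2_eq_square)
  then have "P z = u * of_real (cmod z ^ 2 - 1)" by (simp add: zz)
  then have "cmod (P z) = cmod u * cmod (of_real (cmod z ^ 2 - 1))" by (simp only: norm_mult)
  then show ?thesis by (simp only: nu norm_of_real) simp
qed

lemma lim_mult_zero:
  fixes g :: "complex \<Rightarrow> complex"
  assumes hol: "g holomorphic_on (- {1})"
  and bnd: "\<And>\<epsilon>. \<epsilon> > 0 \<Longrightarrow> \<exists>\<eta>>0. \<forall>z. z \<noteq> 1 \<and> cmod (z - 1) < \<eta> \<longrightarrow> \<bar>cmod z - 1\<bar> * cmod (g z) \<le> \<epsilon>"
  shows "((\<lambda>z. (z - 1) * g z) \<longlongrightarrow> 0) (at 1)"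
proof (rule tendstoI)
  fix e :: real assume e: "e > 0"
  define \<epsilon>0 where "\<epsilon>0 = e/13"
  have e0: "\<epsilon>0 > 0" using e unfolding \<epsilon>0_def by simp
  obtain \<eta> where eta: "\<eta> > 0" "\<And>z. z \<noteq> 1 \<Longrightarrow> cmod (z-1) < \<eta> \<Longrightarrow> \<bar>cmod z - 1\<bar> * cmod (g z) \<le> \<epsilon>0"
    using bnd[OF e0] by blast
  define d where "d = min (\<eta>/2) (1/2)"
  have d: "d > 0" using eta unfolding d_def by simp
  have key: "dist ((c - 1) * g c) 0 < e" if c1: "c \<noteq> 1" and cd0: "dist c 1 < d" for c
  proof -
    have cd: "cmod (c - 1) < d" using cd0 by (simp add: dist_norm)
    define \<rho> where "\<rho> = cmod (c - 1)"
    define s where "s = \<rho> / 2"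
    have \<rho>: "\<rho> > 0" "\<rho> < \<eta>/2" "\<rho> < 1/2" using c1 cd unfolding \<rho>_def d_def by auto
    have s: "s > 0" using \<rho> unfolding s_def by simp
    define P where "P \<equiv> \<lambda>z. cnj c * (z - c)^2 / of_real s + of_real (cmod c ^ 2 + s^2 - 1) * (z - c) / of_real s + of_real s * c"
    define G where "G z = g z * P z" for z
    have sub: "cball c s \<subseteq> - {1}"
    proof
      fix z assume "z \<in> cball c s"
      then have "cmod (z - c) \<le> s" by (simp add: dist_norm norm_minus_commute)
      moreover have "cmod (c - 1) \<le> cmod (z - 1) + cmod (z - c)"
        using norm_triangle_ineq4[of "z - 1" "z - c"] by simp
      ultimately have "cmod (z - 1) > 0" using \<rho> unfolding \<rho>_def s_def by linarith
      then show "z \<in> - {1}" by auto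
    qed
    have holG: "G holomorphic_on cball c s"
      unfolding G_def P_def
      by (intro holomorphic_intros holomorphic_on_subset[OF hol sub]) (use s in auto)
    have contG: "continuous_on (cball c s) G" using holG by (rule holomorphic_on_imp_continuous_on)
    have holG': "G holomorphic_on ball c s" using holG by (rule holomorphic_on_subset) auto
    have bd: "cmod (G z) \<le> 3 * \<epsilon>0" if zc: "cmod (c - z) = s" for z
    proof -
      have zc': "cmod (z - c) = s" using zc by (simp add: norm_minus_commute)
      have Pz: "cmod (P z) = \<bar>cmod z ^ 2 - 1\<bar>" unfolding P_def by (rule circle_poly[OF s zc'])
      have "cmod (z - 1) \<le> cmod (z - c) + cmod (c - 1)"
        using norm_triangle_ineq[of "z - c" "c - 1"] by simp
      then have z1: "cmod (z - 1) \<le> 3 * s" using zc' unfolding \<rho>_def s_def by simp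
      have z1': "cmod (z - 1) < \<eta>" using z1 \<rho> unfolding s_def by linarith
      have "z \<noteq> 1" using sub zc' by (auto simp: dist_norm norm_minus_commute)
      then have gz: "\<bar>cmod z - 1\<bar> * cmod (g z) \<le> \<epsilon>0" using eta(2) z1' by blast
      have "cmod z \<le> 1 + cmod (z - 1)" using norm_triangle_ineq[of 1 "z - 1"] by simp
      then have zn: "cmod z \<le> 2" using z1 \<rho> unfolding s_def by linarith
      have "\<bar>cmod z ^ 2 - 1\<bar> = \<bar>cmod z - 1\<bar> * (cmod z + 1)"
      proof -
        have "cmod z ^ 2 - 1 = (cmod z - 1) * (cmod z + 1)" by (simp add: power2_eq_square algebra_simps)
        then have "\<bar>cmod z ^ 2 - 1\<bar> = \<bar>cmod z - 1\<bar> * \<bar>cmod z + 1\<bar>" by (simp only: abs_mult)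
        then show ?thesis by simp
      qed
      then have "cmod (G z) = (\<bar>cmod z - 1\<bar> * cmod (g z)) * (cmod z + 1)"
        unfolding G_def by (simp add: norm_mult Pz)
      also have "\<dots> \<le> \<epsilon>0 * 3"
        using gz zn e0 by (intro mult_mono) auto
      finally show ?thesis by simp
    qed
    have "cmod ((deriv ^^ 0) G c) \<le> fact 0 * (3 * \<epsilon>0) / s ^ 0"
      by (rule Cauchy_inequality[OF holG' contG s bd])
    then have Gc: "cmod (G c) \<le> 3 * \<epsilon>0" by simp
    have "G c = g c * (of_real s * c)" unfolding G_def P_def using s by simp
    then have gcs: "cmod (g c) * s * cmod c \<le> 3 * \<epsilon>0" using Gc s by (simp add: norm_mult)
    have "cmod c \<ge> 1/2"
    proof -
      have "1 \<le> cmod c + cmod (c - 1)" using norm_triangle_ineq4[of c "c - 1"] by simp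
      then show ?thesis using \<rho> unfolding \<rho>_def by linarith
    qed
    moreover have "cmod (g c) * s * (1/2) \<le> cmod (g c) * s * cmod c"
      using s \<open>cmod c \<ge> 1/2\<close> by (intro mult_left_mono) auto
    ultimately have "cmod (g c) * s * (1/2) \<le> 3 * \<epsilon>0" using gcs by linarith
    then have "cmod (g c) * \<rho> \<le> 12 * \<epsilon>0" unfolding s_def by simp
    then have "cmod ((c - 1) * g c) \<le> 12 * \<epsilon>0" unfolding \<rho>_def by (simp add: norm_mult mult.commute)
    then show "dist ((c - 1) * g c) 0 < e" using e unfolding \<epsilon>0_def by simp
  qed
  show "eventually (\<lambda>z. dist ((z-1) * g z) 0 < e) (at 1)"
    unfolding eventually_at using d key by blast
qed

lemma vanish:
  fixes g :: "complex \<Rightarrow> complex"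
  assumes hol: "g holomorphic_on (- {1})"
  and bnd: "\<And>\<epsilon>. \<epsilon> > 0 \<Longrightarrow> \<exists>\<eta>>0. \<forall>z. z \<noteq> 1 \<and> cmod (z - 1) < \<eta> \<longrightarrow> \<bar>cmod z - 1\<bar> * cmod (g z) \<le> \<epsilon>"
  and inf: "(g \<longlongrightarrow> 0) at_infinity"
  and z: "z \<noteq> 1"
  shows "g z = 0"
proof -
  have hol1: "(\<lambda>z. (z - 1) * g z) holomorphic_on UNIV - {1}"
    by (intro holomorphic_intros) (use hol in \<open>simp add: Compl_eq_Diff_UNIV\<close>)
  have "(\<lambda>y. if y = 1 then 0 else (y - 1) * g y) holomorphic_on UNIV"
    by (rule removable_singularity[OF hol1 open_UNIV lim_mult_zero[OF hol bnd]])
  then obtain D where D: "((\<lambda>y. if y = 1 then 0 else (y - 1) * g y) has_field_derivative D) (at 1)"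
    unfolding holomorphic_on_def field_differentiable_def by (metis UNIV_I at_within_open open_UNIV)
  then have "((\<lambda>y. ((if y = 1 then 0 else (y - 1) * g y) - 0) / (y - 1)) \<longlongrightarrow> D) (at 1)"
    using D unfolding has_field_derivative_iff by simp
  then have gD: "(g \<longlongrightarrow> D) (at 1)"
    by (rule Lim_transform_eventually) (auto simp: eventually_at_filter)
  have hol2: "g holomorphic_on UNIV - {1}" using hol by (simp add: Compl_eq_Diff_UNIV)
  have k: "(\<lambda>y. if y = 1 then D else g y) holomorphic_on UNIV"
    by (rule removable_singularity[OF hol2 open_UNIV gD])
  have ev: "eventually (\<lambda>y. g y = (if y = 1 then D else g y)) at_infinity"
    unfolding eventually_at_infinity by (rule exI[of _ 2]) auto
  have kinf: "((\<lambda>y. if y = 1 then D else g y) \<longlongrightarrow> 0) at_infinity"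
    by (rule Lim_transform_eventually[OF inf ev])
  have "(if z = 1 then D else g z) = 0" by (rule Liouville_weak_0[OF k kinf])
  then show ?thesis using z by simp
qed


lemma geo_bound:
  fixes b c :: "nat \<Rightarrow> real"
  assumes b0: "\<And>n. b n \<ge> 0" and bl: "b \<longlonglongrightarrow> 0" and cl: "c \<longlonglongrightarrow> 0" and e: "\<epsilon> > 0"
  shows "\<exists>C\<ge>0. \<forall>s V K. 0 \<le> s \<longrightarrow> s < 1 \<longrightarrow> (\<forall>N. V \<le> (\<Sum>n<N. s^n * b n) + K * c N) \<longrightarrow> (1 - s) * V \<le> (1 - s) * C + \<epsilon>"
proof -
  obtain N0 where N0: "\<And>n. n \<ge> N0 \<Longrightarrow> b n < \<epsilon>"
    using LIMSEQ_D[OF bl e] by (metis b0 real_norm_def abs_of_nonneg diff_zero)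
  define C where "C = (\<Sum>n<N0. b n)"
  have C0: "C \<ge> 0" unfolding C_def by (simp add: b0 sum_nonneg)
  have main: "(1 - s) * V \<le> (1 - s) * C + \<epsilon>"
    if s: "0 \<le> s" "s < 1" and V: "\<forall>N. V \<le> (\<Sum>n<N. s^n * b n) + K * c N" for s V K
  proof -
    have gs: "(\<Sum>n<N. s^n) \<le> 1/(1-s)" for N
    proof -
      have "(\<Sum>n<N. s^n) = (1 - s^N)/(1-s)" using s by (simp add: sum_gp_strict)
      also have "\<dots> \<le> 1/(1-s)" using s by (simp add: divide_right_mono)
      finally show ?thesis .
    qed
    have sb: "(\<Sum>n<N. s^n * b n) \<le> C + \<epsilon> / (1-s)" if N: "N \<ge> N0" for N
    proof -
      have "(\<Sum>n<N. s^n * b n) = (\<Sum>n\<in>{0..<N0}. s^n * b n) + (\<Sum>n\<in>{N0..<N}. s^n * b n)"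
        using N by (simp add: lessThan_atLeast0 sum.atLeastLessThan_concat)
      also have "(\<Sum>n\<in>{0..<N0}. s^n * b n) \<le> (\<Sum>n\<in>{0..<N0}. b n)"
        by (intro sum_mono) (use s b0 in \<open>simp add: mult_left_le_one_le power_le_one\<close>)
      also have "(\<Sum>n\<in>{N0..<N}. s^n * b n) \<le> (\<Sum>n\<in>{N0..<N}. \<epsilon> * s^n)"
        by (intro sum_mono) (use s N0 in \<open>simp add: mult.commute mult_right_mono less_imp_le\<close>)
      also have "(\<Sum>n\<in>{N0..<N}. \<epsilon> * s^n) \<le> (\<Sum>n<N. \<epsilon> * s^n)"
        by (intro sum_mono2) (use s e in auto)
      also have "(\<Sum>n<N. \<epsilon> * s^n) = \<epsilon> * (\<Sum>n<N. s^n)" by (simp add: sum_distrib_left)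
      also have "\<dots> \<le> \<epsilon> * (1/(1-s))" using gs e by (intro mult_left_mono) auto
      finally show ?thesis unfolding C_def by (simp add: lessThan_atLeast0)
    qed
    have lim: "(\<lambda>N. C + \<epsilon>/(1-s) + K * c N) \<longlonglongrightarrow> C + \<epsilon>/(1-s) + K * 0"
      by (intro tendsto_intros cl)
    have "V \<le> C + \<epsilon>/(1-s)"
      using LIMSEQ_le_const[OF lim, of V] V sb by (smt (verit) mult_zero_right)
    then have "(1-s) * V \<le> (1-s) * (C + \<epsilon>/(1-s))" using s by (intro mult_left_mono) auto
    also have "\<dots> = (1-s) * C + \<epsilon>" using s by (simp add: field_simps)
    finally show ?thesis .
  qed
  show ?thesis using C0 main by blast
qed


lemma bcl_add: "bounded_clinear S \<Longrightarrow> S (a + b) = S a + S b"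
  unfolding bounded_clinear_def by (simp add: bounded_linear.linear linear_add)
lemma bcl_diff: "bounded_clinear S \<Longrightarrow> S (a - b) = S a - S b"
  unfolding bounded_clinear_def by (simp add: bounded_linear.linear linear_diff)
lemma bcl_zero: "bounded_clinear S \<Longrightarrow> S 0 = 0"
  unfolding bounded_clinear_def by (simp add: bounded_linear.linear linear_0)
lemma bcl_scaleC: "bounded_clinear S \<Longrightarrow> S (c *\<^sub>C a) = c *\<^sub>C S a"
  unfolding bounded_clinear_def by simp
lemma bcl_bound: "bounded_clinear S \<Longrightarrow> \<exists>K>0. \<forall>v. norm (S v) \<le> K * norm v"
  unfolding bounded_clinear_def using bounded_linear.pos_bounded by (metis mult.commute)
lemma bcl_sum: "bounded_clinear S \<Longrightarrow> S (\<Sum>i\<in>I. f i) = (\<Sum>i\<in>I. S (f i))"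
  unfolding bounded_clinear_def by (simp add: bounded_linear.linear linear_sum)
lemma bcl_pow_zero: "bounded_clinear (S::'a::complex_normed_vector\<Rightarrow>'a) \<Longrightarrow> (S ^^ n) 0 = 0"
proof (induction n)
  case 0 show ?case by simp
next
  case (Suc n) then show ?case using bcl_zero[of S] by simp
qed

definition res :: "('a::complex_normed_vector \<Rightarrow> 'a) \<Rightarrow> complex \<Rightarrow> 'a \<Rightarrow> 'a" where
  "res T z = (SOME S. bounded_clinear S \<and> S \<circ> (\<lambda>x. T x - z *\<^sub>C x) = id \<and> (\<lambda>x. T x - z *\<^sub>C x) \<circ> S = id)"

lemma res_props:
  assumes "z \<notin> spectrum T"
  shows "bounded_clinear (res T z) \<and> (\<forall>v. res T z (T v - z *\<^sub>C v) = v) \<and> (\<forall>v. T (res T z v) - z *\<^sub>C res T z v = v)"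
proof -
  have "\<exists>S. bounded_clinear S \<and> S \<circ> (\<lambda>x. T x - z *\<^sub>C x) = id \<and> (\<lambda>x. T x - z *\<^sub>C x) \<circ> S = id"
    using assms unfolding spectrum_def op_invertible_def by blast
  from someI_ex[OF this] show ?thesis unfolding res_def[symmetric]
    by (simp add: fun_eq_iff)
qed

locale spec1 =
  fixes T :: "'a::{complex_normed_vector, banach} \<Rightarrow> 'a"
  assumes bc: "bounded_clinear T" and sp: "spectrum T = {1}"
begin

abbreviation "R \<equiv> res T"

lemma R_bc: "z \<noteq> 1 \<Longrightarrow> bounded_clinear (R z)"
  using res_props[of z T] sp by simp
lemma R_left: "z \<noteq> 1 \<Longrightarrow> R z (T v - z *\<^sub>C v) = v"
  using res_props[of z T] sp by simp
lemma R_right: "z \<noteq> 1 \<Longrightarrow> T (R z v) - z *\<^sub>C R z v = v"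
  using res_props[of z T] sp by simp

lemma R_T: assumes "z \<noteq> 1" shows "R z (T w) = w + z *\<^sub>C R z w"
proof -
  have "T w = (T w - z *\<^sub>C w) + z *\<^sub>C w" by simp
  then have "R z (T w) = R z (T w - z *\<^sub>C w) + R z (z *\<^sub>C w)"
    using bcl_add[OF R_bc[OF assms]] by metis
  then show ?thesis using R_left[OF assms] bcl_scaleC[OF R_bc[OF assms]] by simp
qed

lemma resolvent_id:
  assumes a: "a \<noteq> 1" and b: "b \<noteq> 1"
  shows "R b v - R a v = (b - a) *\<^sub>C R b (R a v)"
proof -
  have "T (R a v) - b *\<^sub>C R a v = (T (R a v) - a *\<^sub>C R a v) + (a - b) *\<^sub>C R a v"
    by (simp add: scaleC_diff_left)
  also have "\<dots> = v + (a - b) *\<^sub>C R a v" using R_right[OF a] by simp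
  finally have "R b (T (R a v) - b *\<^sub>C R a v) = R b (v + (a - b) *\<^sub>C R a v)" by simp
  then have eq: "R a v = R b v + (a - b) *\<^sub>C R b (R a v)"
    using R_left[OF b] bcl_add[OF R_bc[OF b]] bcl_scaleC[OF R_bc[OF b]] by simp
  have m: "(b - a) *\<^sub>C R b (R a v) = - ((a - b) *\<^sub>C R b (R a v))"
    using scaleC_minus_left[of "a - b" "R b (R a v)"] by simp
  show ?thesis unfolding m by (subst eq) (simp add: algebra_simps)
qed

lemma R_local_bound:
  assumes a: "a \<noteq> 1" and b: "b \<noteq> 1" and K: "\<And>w. norm (R a w) \<le> K * norm w"
    and small: "cmod (b - a) * K \<le> 1/2"
  shows "norm (R b v) \<le> 2 * K * norm v"
proof -
  have m: "(b - a) *\<^sub>C R a (R b v) = - ((a - b) *\<^sub>C R a (R b v))"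
    using scaleC_minus_left[of "a - b" "R a (R b v)"] by simp
  have "R b v = R a v + (b - a) *\<^sub>C R a (R b v)"
    unfolding m using resolvent_id[OF b a, of v] by (simp add: algebra_simps)
  then have "norm (R b v) \<le> norm (R a v) + cmod (b - a) * norm (R a (R b v))"
    by (metis norm_scaleC norm_triangle_ineq)
  also have "\<dots> \<le> K * norm v + cmod (b - a) * (K * norm (R b v))"
    using K by (intro add_mono mult_left_mono) auto
  also have "\<dots> \<le> K * norm v + 1/2 * norm (R b v)"
    using mult_right_mono[OF small norm_ge_zero[of "R b v"]] by (simp add: mult.assoc)
  finally show ?thesis by simp
qed

lemma T_bound: "\<exists>B>0. \<forall>v. norm (T v) \<le> B * norm v"
  using bcl_bound[OF bc] .

lemma R_far_bound:
  assumes B: "\<And>v. norm (T v) \<le> B * norm v" and z: "z \<noteq> 1" and zB: "cmod z > B"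
  shows "norm (R z v) \<le> norm v / (cmod z - B)"
proof -
  define w where "w = R z v"
  have "z *\<^sub>C w = T w - v" using R_right[OF z, of v] unfolding w_def by (simp add: algebra_simps)
  then have "norm (z *\<^sub>C w) = norm (T w - v)" by (simp only:)
  then have "cmod z * norm w = norm (T w - v)" by (simp only: norm_scaleC)
  also have "\<dots> \<le> B * norm w + norm v" using B[of w] by (smt (verit) norm_triangle_ineq4)
  finally have "(cmod z - B) * norm w \<le> norm v" by (simp add: algebra_simps)
  then show ?thesis unfolding w_def using zB by (simp add: field_simps)
qed

lemma R_at_infinity:
  assumes \<psi>: "bounded_linear \<psi>"
  shows "((\<lambda>z. \<psi> (R z v)) \<longlongrightarrow> 0) at_infinity"
proof -
  obtain B where B: "B > 0" "\<And>v. norm (T v) \<le> B * norm v" using T_bound by blast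
  obtain C where C: "C > 0" "\<And>v. norm (\<psi> v) \<le> norm v * C" using bounded_linear.pos_bounded[OF \<psi>] by blast
  have ev: "eventually (\<lambda>z. norm (\<psi> (R z v)) \<le> C * norm v * inverse (cmod z - B)) at_infinity"
    unfolding eventually_at_infinity
  proof (rule exI[of _ "B + 2"], intro allI impI)
    fix z :: complex assume z: "B + 2 \<le> cmod z"
    then have z1: "z \<noteq> 1" using B by auto
    have "norm (\<psi> (R z v)) \<le> norm (R z v) * C" by (rule C(2))
    also have "\<dots> \<le> norm v / (cmod z - B) * C"
      using R_far_bound[OF B(2) z1] z C by (intro mult_right_mono) auto
    finally show "norm (\<psi> (R z v)) \<le> C * norm v * inverse (cmod z - B)" by (simp add: field_simps)
  qed
  have "filterlim (\<lambda>z::complex. cmod z) at_top at_infinity"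
    using filterlim_at_infinity_imp_norm_at_top[OF filterlim_ident] .
  then have "filterlim (\<lambda>z::complex. -B + cmod z) at_top at_infinity"
    by (rule filterlim_tendsto_add_at_top[OF tendsto_const])
  then have "((\<lambda>z::complex. inverse (-B + cmod z)) \<longlongrightarrow> 0) at_infinity"
    by (rule tendsto_inverse_0_at_top)
  then have "((\<lambda>z::complex. C * norm v * inverse (cmod z - B)) \<longlongrightarrow> C * norm v * 0) at_infinity"
    by (intro tendsto_mult tendsto_const) simp
  then show ?thesis using Lim_null_comparison[OF ev] by simp
qed

end


context spec1 begin

lemma g_hol:
  assumes \<phi>: "bounded_linear \<phi>" and cl: "\<And>c v. \<phi> (c *\<^sub>C v) = c * \<phi> v"
  shows "(\<lambda>z. \<phi> (R z x)) holomorphic_on (- {1})"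
proof -
  have op: "open (-{1::complex})" by auto
  show ?thesis unfolding holomorphic_on_open[OF op]
  proof
    fix a :: complex assume "a \<in> - {1}"
    then have a: "a \<noteq> 1" by simp
    obtain K where K: "K > 0" "\<And>w. norm (R a w) \<le> K * norm w" using bcl_bound[OF R_bc[OF a]] by blast
    obtain C where C: "C > 0" "\<And>v. norm (\<phi> v) \<le> norm v * C" using bounded_linear.pos_bounded[OF \<phi>] by blast
    define w where "w = R a x"
    define D where "D = \<phi> (R a w)"
    define d where "d = min (cmod (a - 1)) (1/(2*K))"
    have d: "d > 0" using a K unfolding d_def by simp
    have P: "y \<noteq> 1 \<and> cmod (y - a) * K \<le> 1/2" if "dist y a < d" for y
    proof -
      have y: "cmod (y - a) < cmod (a - 1)" "cmod (y - a) < 1/(2*K)" using that by (auto simp: dist_norm d_def)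
      have "y \<noteq> 1" using y(1) by (auto simp: norm_minus_commute)
      moreover have "cmod (y - a) * K \<le> 1/2" using y(2) K by (simp add: field_simps)
      ultimately show ?thesis by blast
    qed
    have ev: "eventually (\<lambda>y. y \<noteq> 1 \<and> cmod (y - a) * K \<le> 1/2) (at a)"
      unfolding eventually_at using d P by blast
    have ev2: "eventually (\<lambda>y. norm (\<phi> (R y w) - D) \<le> C * 2 * K * norm (R a w) * cmod (y - a)) (at a)"
      using ev
    proof eventually_elim
      case (elim y)
      then have y1: "y \<noteq> 1" and sm: "cmod (y - a) * K \<le> 1/2" by auto
      have "\<phi> (R y w) - D = \<phi> (R y w - R a w)" unfolding D_def using linear_diff[OF bounded_linear.linear[OF \<phi>]] by simp
      also have "R y w - R a w = (y - a) *\<^sub>C R y (R a w)" by (rule resolvent_id[OF a y1])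
      finally have "\<phi> (R y w) - D = \<phi> ((y - a) *\<^sub>C R y (R a w))" .
      then have "norm (\<phi> (R y w) - D) \<le> norm ((y - a) *\<^sub>C R y (R a w)) * C" using C(2) by metis
      also have "\<dots> = cmod (y - a) * norm (R y (R a w)) * C" by simp
      also have "\<dots> \<le> cmod (y - a) * (2 * K * norm (R a w)) * C"
        using R_local_bound[OF a y1 K(2) sm] C K by (intro mult_right_mono mult_left_mono) auto
      finally show ?case by (simp add: algebra_simps)
    qed
    have "((\<lambda>y. cmod (y - a)) \<longlongrightarrow> cmod (a - a)) (at a)"
      by (intro tendsto_intros)
    then have "((\<lambda>y. C * 2 * K * norm (R a w) * cmod (y - a)) \<longlongrightarrow> C * 2 * K * norm (R a w) * 0) (at a)"
      by (intro tendsto_intros) simp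
    then have "((\<lambda>y. \<phi> (R y w) - D) \<longlongrightarrow> 0) (at a)"
      using Lim_null_comparison[OF ev2] by simp
    then have lim: "((\<lambda>y. \<phi> (R y w)) \<longlongrightarrow> D) (at a)" by (rule LIM_zero_cancel)
    have ev3: "eventually (\<lambda>y. \<phi> (R y w) = (\<phi> (R y x) - \<phi> (R a x)) / (y - a)) (at a)"
      using ev eventually_at_filter[of "\<lambda>y. y \<noteq> a" a UNIV]
    proof -
      have "eventually (\<lambda>y. y \<noteq> a) (at a)" by (simp add: eventually_at_filter)
      with ev show ?thesis
      proof eventually_elim
        case (elim y)
        then have y1: "y \<noteq> 1" and ya: "y \<noteq> a" by auto
        have "\<phi> (R y x) - \<phi> (R a x) = \<phi> (R y x - R a x)" using linear_diff[OF bounded_linear.linear[OF \<phi>]] by simp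
        also have "\<dots> = (y - a) * \<phi> (R y w)" unfolding w_def resolvent_id[OF a y1] cl ..
        finally show ?case using ya by simp
      qed
    qed
    have "((\<lambda>y. (\<phi> (R y x) - \<phi> (R a x)) / (y - a)) \<longlongrightarrow> D) (at a)"
      by (rule Lim_transform_eventually[OF lim ev3])
    then show "\<exists>f'. ((\<lambda>z. \<phi> (R z x)) has_field_derivative f') (at a)"
      unfolding has_field_derivative_iff by blast
  qed
qed

lemma exp_T:
  assumes z: "z \<noteq> 1" "z \<noteq> 0"
  shows "R z x = - (\<Sum>n<N. (inverse z)^(n+1) *\<^sub>C (T^^n) x) + (inverse z)^N *\<^sub>C R z ((T^^N) x)"
proof (induction N)
  case 0 show ?case by (simp add: scaleC_one)
next
  case (Suc N)
  define Y where "Y = R z ((T^^N) x)"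
  define q where "q = inverse z"
  have R1: "R z ((T^^Suc N) x) = (T^^N) x + z *\<^sub>C Y" unfolding Y_def using R_T[OF z(1)] by simp
  have qz: "q^(Suc N) * z = q^N" unfolding q_def using z(2) by (simp add: field_simps)
  have "q^Suc N *\<^sub>C R z ((T^^Suc N) x) = q^Suc N *\<^sub>C (T^^N) x + q^N *\<^sub>C Y"
    unfolding R1 scaleC_add_right scaleC_scaleC qz ..
  then have "q^N *\<^sub>C Y = - (q^(N+1) *\<^sub>C (T^^N) x) + q^Suc N *\<^sub>C R z ((T^^Suc N) x)"
    by (simp add: algebra_simps)
  with Suc show ?case unfolding q_def[symmetric] Y_def[symmetric] by (simp add: algebra_simps)
qed

lemma exp_S:
  assumes z: "z \<noteq> 1" and TS: "\<And>y. T (S y) = y"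
  shows "R z x = (\<Sum>n<N. z^n *\<^sub>C (S^^(n+1)) x) + z^N *\<^sub>C R z ((S^^N) x)"
proof (induction N)
  case 0 show ?case by (simp add: scaleC_one)
next
  case (Suc N)
  define Y where "Y = R z ((S^^Suc N) x)"
  have "R z ((S^^N) x) = R z (T ((S^^Suc N) x))" using TS by simp
  also have "\<dots> = (S^^Suc N) x + z *\<^sub>C Y" unfolding Y_def by (rule R_T[OF z])
  finally have "z^N *\<^sub>C R z ((S^^N) x) = z^N *\<^sub>C (S^^(N+1)) x + z^Suc N *\<^sub>C Y"
    by (simp add: scaleC_add_right scaleC_scaleC mult.commute)
  with Suc show ?case unfolding Y_def by (simp add: algebra_simps)
qed

end


context spec1 begin

lemma nb_T:
  assumes z: "z \<noteq> 1" "cmod z > 1" and K: "\<And>w. norm (R z w) \<le> K * norm w" "K \<ge> 0"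
  shows "norm (R z x) \<le> (\<Sum>n<N. (1/cmod z)^n * norm ((T^^n) x)) + K * norm ((T^^N) x)"
proof -
  have z0: "z \<noteq> 0" using z by auto
  define q where "q = inverse z"
  have q2: "cmod q = 1/cmod z" unfolding q_def using norm_inverse[of z] by (simp add: inverse_eq_divide)
  have q1: "cmod q \<le> 1" "cmod q = 1/cmod z" using q2 z by (simp_all add: divide_le_eq)
  have "norm (R z x) = norm (- (\<Sum>n<N. q^(n+1) *\<^sub>C (T^^n) x) + q^N *\<^sub>C R z ((T^^N) x))"
    using exp_T[OF z(1) z0, where N=N and x=x] unfolding q_def by simp
  also have "\<dots> \<le> norm (\<Sum>n<N. q^(n+1) *\<^sub>C (T^^n) x) + norm (q^N *\<^sub>C R z ((T^^N) x))"
    using norm_triangle_ineq[of "- (\<Sum>n<N. q^(n+1) *\<^sub>C (T^^n) x)" "q^N *\<^sub>C R z ((T^^N) x)"] by (simp only: norm_minus_cancel)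
  also have "norm (\<Sum>n<N. q^(n+1) *\<^sub>C (T^^n) x) \<le> (\<Sum>n<N. norm (q^(n+1) *\<^sub>C (T^^n) x))"
    by (rule norm_sum)
  also have "\<dots> \<le> (\<Sum>n<N. (1/cmod z)^n * norm ((T^^n) x))"
  proof (intro sum_mono)
    fix n
    have "cmod q ^ (n+1) \<le> cmod q ^ n" by (rule power_decreasing) (use q1 in auto)
    then have "cmod q ^ (n+1) * norm ((T^^n) x) \<le> cmod q ^ n * norm ((T^^n) x)"
      by (intro mult_right_mono) auto
    then have b: "cmod q ^ (n+1) * norm ((T^^n) x) \<le> (1/cmod z)^n * norm ((T^^n) x)"
      by (simp only: q1(2))
    have c: "norm (q^(n+1) *\<^sub>C (T^^n) x) = cmod q ^ (n+1) * norm ((T^^n) x)"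
      by (simp only: norm_scaleC norm_power)
    show "norm (q^(n+1) *\<^sub>C (T^^n) x) \<le> (1/cmod z)^n * norm ((T^^n) x)"
      unfolding c by (rule b)
  qed
  also have "norm (q^N *\<^sub>C R z ((T^^N) x)) \<le> K * norm ((T^^N) x)"
  proof -
    have "norm (q^N *\<^sub>C R z ((T^^N) x)) = cmod q ^ N * norm (R z ((T^^N) x))" by (simp add: norm_power)
    also have "\<dots> \<le> 1 * (K * norm ((T^^N) x))"
      using q1 K by (intro mult_mono) (auto simp: power_le_one)
    finally show ?thesis by simp
  qed
  finally show ?thesis by simp
qed

lemma nb_S:
  assumes z: "z \<noteq> 1" "cmod z < 1" and K: "\<And>w. norm (R z w) \<le> K * norm w" "K \<ge> 0"
    and TS: "\<And>y. T (S y) = y"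
  shows "norm (R z x) \<le> (\<Sum>n<N. (cmod z)^n * norm ((S^^(n+1)) x)) + K * norm ((S^^N) x)"
proof -
  have "norm (R z x) = norm ((\<Sum>n<N. z^n *\<^sub>C (S^^(n+1)) x) + z^N *\<^sub>C R z ((S^^N) x))"
    using exp_S[OF z(1) TS, where N=N and x=x] by simp
  also have "\<dots> \<le> norm (\<Sum>n<N. z^n *\<^sub>C (S^^(n+1)) x) + norm (z^N *\<^sub>C R z ((S^^N) x))"
    by (rule norm_triangle_ineq)
  also have "norm (\<Sum>n<N. z^n *\<^sub>C (S^^(n+1)) x) \<le> (\<Sum>n<N. norm (z^n *\<^sub>C (S^^(n+1)) x))"
    by (rule norm_sum)
  also have "\<dots> = (\<Sum>n<N. (cmod z)^n * norm ((S^^(n+1)) x))"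
    by (simp add: norm_power)
  also have "norm (z^N *\<^sub>C R z ((S^^N) x)) \<le> K * norm ((S^^N) x)"
  proof -
    have "norm (z^N *\<^sub>C R z ((S^^N) x)) = cmod z ^ N * norm (R z ((S^^N) x))" by (simp add: norm_power)
    also have "\<dots> \<le> 1 * (K * norm ((S^^N) x))"
      using z K by (intro mult_mono) (auto simp: power_le_one)
    finally show ?thesis by simp
  qed
  finally show ?thesis by simp
qed

lemma bnd:
  assumes \<phi>: "bounded_linear \<phi>" and xT: "(\<lambda>n. (T^^n) x) \<longlonglongrightarrow> 0"
    and TS: "\<And>y. T (S y) = y" and xS: "(\<lambda>n. (S^^n) x) \<longlonglongrightarrow> 0"
    and e: "\<epsilon> > 0"
  shows "\<exists>\<eta>>0. \<forall>z. z \<noteq> 1 \<and> cmod (z - 1) < \<eta> \<longrightarrow> \<bar>cmod z - 1\<bar> * cmod (\<phi> (R z x)) \<le> \<epsilon>"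
proof -
  obtain C\<phi> where C\<phi>: "C\<phi> > 0" "\<And>v. cmod (\<phi> v) \<le> norm v * C\<phi>" using bounded_linear.pos_bounded[OF \<phi>] by blast
  define e' where "e' = \<epsilon> / (4 * C\<phi>)"
  have e': "e' > 0" using e C\<phi> unfolding e'_def by simp
  have bT: "(\<lambda>n. norm ((T^^n) x)) \<longlonglongrightarrow> 0" using xT by (simp add: tendsto_norm_zero_iff)
  have bS: "(\<lambda>n. norm ((S^^n) x)) \<longlonglongrightarrow> 0" using xS by (simp add: tendsto_norm_zero_iff)
  have bS1: "(\<lambda>n. norm ((S^^(n+1)) x)) \<longlonglongrightarrow> 0" using LIMSEQ_Suc[OF bS] by simp
  have "\<exists>C\<ge>0. \<forall>s V K. 0 \<le> s \<longrightarrow> s < 1 \<longrightarrow> (\<forall>N. V \<le> (\<Sum>n<N. s^n * norm ((T^^n) x)) + K * norm ((T^^N) x)) \<longrightarrow> (1 - s) * V \<le> (1 - s) * C + e'"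
    by (rule geo_bound[OF _ bT bT e']) simp
  then obtain C1 where C1: "C1 \<ge> 0" and H1': "\<forall>s V K. 0 \<le> s \<longrightarrow> s < 1 \<longrightarrow> (\<forall>N. V \<le> (\<Sum>n<N. s^n * norm ((T^^n) x)) + K * norm ((T^^N) x)) \<longrightarrow> (1 - s) * V \<le> (1 - s) * C1 + e'"
    by blast
  note H1 = H1'[rule_format]
  have "\<exists>C\<ge>0. \<forall>s V K. 0 \<le> s \<longrightarrow> s < 1 \<longrightarrow> (\<forall>N. V \<le> (\<Sum>n<N. s^n * norm ((S^^(n+1)) x)) + K * norm ((S^^N) x)) \<longrightarrow> (1 - s) * V \<le> (1 - s) * C + e'"
    by (rule geo_bound[OF _ bS1 bS e']) simp
  then obtain C2 where C2: "C2 \<ge> 0" and H2': "\<forall>s V K. 0 \<le> s \<longrightarrow> s < 1 \<longrightarrow> (\<forall>N. V \<le> (\<Sum>n<N. s^n * norm ((S^^(n+1)) x)) + K * norm ((S^^N) x)) \<longrightarrow> (1 - s) * V \<le> (1 - s) * C2 + e'"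
    by blast
  note H2 = H2'[rule_format]
  define \<eta> where "\<eta> = min (1/2) (e' / (C1 + C2 + 1))"
  have \<eta>: "\<eta> > 0" using e' C1 C2 unfolding \<eta>_def by simp
  have \<eta>C: "\<eta> * C1 \<le> e'" "\<eta> * C2 \<le> e'"
  proof -
    have "\<eta> \<le> e' / (C1 + C2 + 1)" unfolding \<eta>_def by simp
    then have "\<eta> * (C1 + C2 + 1) \<le> e'" using C1 C2 by (simp add: field_simps)
    moreover have "\<eta> * C1 \<le> \<eta> * (C1 + C2 + 1)" "\<eta> * C2 \<le> \<eta> * (C1 + C2 + 1)"
      using C1 C2 \<eta> by (intro mult_left_mono; simp)+
    ultimately show "\<eta> * C1 \<le> e'" "\<eta> * C2 \<le> e'" by linarith+
  qed
  show ?thesis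
  proof (rule exI[of _ \<eta>], intro conjI allI impI)
    show "\<eta> > 0" by fact
    fix z :: complex assume zz: "z \<noteq> 1 \<and> cmod (z - 1) < \<eta>"
    then have z1: "z \<noteq> 1" and zd: "cmod (z - 1) < \<eta>" by auto
    define V where "V = norm (R z x)"
    have V0: "V \<ge> 0" unfolding V_def by simp
    have dz: "\<bar>cmod z - 1\<bar> \<le> cmod (z - 1)" using norm_triangle_ineq3[of z 1] by simp
    have zle: "cmod z \<le> 3/2" using dz zd unfolding \<eta>_def by linarith
    obtain K where K: "K > 0" "\<And>w. norm (R z w) \<le> K * norm w" using bcl_bound[OF R_bc[OF z1]] by blast
    have dV: "\<bar>cmod z - 1\<bar> * V \<le> 3 * e'"
    proof (cases "cmod z > 1")
      case True
      define s where "s = 1 / cmod z"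
      have s: "0 \<le> s" "s < 1" using True unfolding s_def by (auto simp: divide_less_eq)
      have "(1 - s) * V \<le> (1 - s) * C1 + e'"
        by (rule H1[OF s]) (use nb_T[OF z1 True K(2)] K(1) in \<open>simp add: V_def s_def\<close>)
      then have "cmod z * ((1 - s) * V) \<le> cmod z * ((1 - s) * C1 + e')"
        using True by (intro mult_left_mono) auto
      moreover have "cmod z * (1 - s) = cmod z - 1" using True unfolding s_def by (auto simp: field_simps)
      ultimately have "(cmod z - 1) * V \<le> (cmod z - 1) * C1 + cmod z * e'"
        by (simp add: algebra_simps)
      moreover have "(cmod z - 1) * C1 \<le> \<eta> * C1" using dz zd C1 True by (intro mult_right_mono) auto
      moreover have "cmod z * e' \<le> 2 * e'" using zle e' by (intro mult_right_mono) auto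
      ultimately show ?thesis using True \<eta>C by simp
    next
      case False
      show ?thesis
      proof (cases "cmod z < 1")
        case True
        have "(1 - cmod z) * V \<le> (1 - cmod z) * C2 + e'"
          by (rule H2) (use True nb_S[OF z1 True K(2) _ TS] K(1) in \<open>simp_all add: V_def\<close>)
        moreover have "(1 - cmod z) * C2 \<le> \<eta> * C2" using dz zd C2 True by (intro mult_right_mono) auto
        ultimately show ?thesis using True \<eta>C e' by simp
      next
        case False
        then have "cmod z = 1" using \<open>\<not> cmod z > 1\<close> by simp
        then show ?thesis using e' by simp
      qed
    qed
    have "\<bar>cmod z - 1\<bar> * cmod (\<phi> (R z x)) \<le> \<bar>cmod z - 1\<bar> * (V * C\<phi>)"
      using C\<phi>(2) unfolding V_def by (intro mult_left_mono) auto
    also have "\<dots> = (\<bar>cmod z - 1\<bar> * V) * C\<phi>" by simp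
    also have "\<dots> \<le> (3 * e') * C\<phi>" using dV C\<phi> by (intro mult_right_mono) auto
    also have "\<dots> \<le> \<epsilon>" using C\<phi> e unfolding e'_def by (simp add: field_simps)
    finally show "\<bar>cmod z - 1\<bar> * cmod (\<phi> (R z x)) \<le> \<epsilon>" .
  qed
qed

end

theorem lemma3p1:
  fixes T :: "'a::{complex_normed_vector, banach} \<Rightarrow> 'a"
  assumes "bounded_clinear T"
    and "spectrum T = {1}"
  shows "decay_set T \<inter> decay_set (inv T) = {0}"
proof -
  interpret spec1 T using assms by unfold_locales
  have "0 \<notin> spectrum T" using assms(2) by simp
  moreover have "(\<lambda>x. T x - 0 *\<^sub>C x) = T" by simp
  ultimately obtain S where S: "bounded_clinear S" "S \<circ> T = id" "T \<circ> S = id"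
    unfolding spectrum_def op_invertible_def by auto
  have invT: "inv T = S" by (rule inv_unique_comp) (use S in auto)
  have TS: "\<And>y. T (S y) = y" using S(3) by (simp add: fun_eq_iff)
  have BL: "bounded_linear T" using assms(1) unfolding bounded_clinear_def by simp
  show ?thesis
  proof (rule equalityI)
    show "{0} \<subseteq> decay_set T \<inter> decay_set (inv T)"
      unfolding decay_set_def invT using bcl_pow_zero[OF assms(1)] bcl_pow_zero[OF S(1)] by simp
  next
    show "decay_set T \<inter> decay_set (inv T) \<subseteq> {0}"
    proof
      fix x assume "x \<in> decay_set T \<inter> decay_set (inv T)"
      then have xT: "(\<lambda>n. (T^^n) x) \<longlonglongrightarrow> 0" and xS: "(\<lambda>n. (S^^n) x) \<longlonglongrightarrow> 0"
        unfolding decay_set_def invT by auto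
      show "x \<in> {0}"
      proof (rule ccontr)
        assume "x \<notin> {0}"
        then obtain \<phi> :: "'a \<Rightarrow> complex" where \<phi>: "bounded_linear \<phi>" and cl: "\<And>c v. \<phi> (c *\<^sub>C v) = c * \<phi> v"
          and px: "\<phi> x \<noteq> 0"
          using hahn_banach_complex[of x] by auto
        have g0: "\<phi> (R z x) = 0" if "z \<noteq> 1" for z
          by (rule vanish[OF g_hol[OF \<phi> cl] bnd[OF \<phi> xT TS xS] R_at_infinity[OF \<phi>] that])
        have lim: "((\<lambda>z. \<phi> (T (R z x))) \<longlongrightarrow> 0) at_infinity"
          using R_at_infinity[OF bounded_linear_compose[OF \<phi> BL]] .
        have ev: "eventually (\<lambda>z. \<phi> (T (R z x)) = \<phi> x) at_infinity"
          unfolding eventually_at_infinity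
        proof (rule exI[of _ 2], intro allI impI)
          fix z :: complex assume "2 \<le> cmod z"
          then have z1: "z \<noteq> 1" by auto
          have "\<phi> x = \<phi> (T (R z x) - z *\<^sub>C R z x)" using R_right[OF z1] by simp
          also have "\<dots> = \<phi> (T (R z x)) - z * \<phi> (R z x)"
            using linear_diff[OF bounded_linear.linear[OF \<phi>]] cl by simp
          finally show "\<phi> (T (R z x)) = \<phi> x" using g0[OF z1] by simp
        qed
        have "((\<lambda>z::complex. \<phi> x) \<longlongrightarrow> 0) at_infinity" by (rule Lim_transform_eventually[OF lim ev])
        then have "\<phi> x = 0" using tendsto_const_iff[OF trivial_limit_at_infinity] by blast
        then show False using px by simp
      qed
    qed
  qed
qed


end
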